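(* Assume (A1)–(A3), let SLPMM be run with any parameters $\sigma,\alpha>0$, let $K\ge1$ be an integer and $\bar x^K:=\frac1K\sum_{k=0}^{K-1}x^k$. Then for every $z\in\Phi$, $$\mathbb E[f(\bar x^K)]-f(z)\le\frac{\kappa_f^2}{2\alpha}+\frac{\sigma}{2}\nu_g^2+\frac{\alpha}{2K}R^2.$$
   Context: Let $\mathcal C\subset\mathbb R^n$ be a nonempty compact convex set. Let $\xi$ be a random vector whose distribution is supported on $\Xi\subseteq\mathbb R^q$, and let $F:\mathcal C\times\Xi\to\mathbb R$ and $G_i:\mathcal C\times\Xi\to\mathbb R$ ($i=1,\dots,p$) be such that $F(\cdot,\xi)$, $G_i(\cdot,\xi)$ are convex and continuous on $\mathcal C$ for every $\xi$, and $f(x):=\mathbb E[F(x,\xi)]$, $g_i(x):=\mathbb E[G_i(x,\xi)]$ are finite on $\mathcal C$. Write $G=(G_1,\dots,G_p)^T$. The feasible set is $\Phi:=\{x\in\mathcal C: g_i(x)\le0,\ i=1,\dots,p\}$. Stochastic subgradients: $v_0(x,\xi)\in\partial_xF(x,\xi)$, $v_i(x,\xi)\in\partial_xG_i(x,\xi)$. $[t]_+=\max\{t,0\}$, $[t]_+^2=(\max\{t,0\})^2$. SLPMM: fix $\sigma,\alpha>0$, $x^0\in\mathcal C$, $\lambda^0=0\in\mathbb R^p$, i.i.d. copies $\xi^0,\xi^1,\dots$ of $\xi$. For $k\ge0$, $x^{k+1}=\arg\min_{x\in\mathcal C}\{\mathcal L^k_\sigma(x,\lambda^k)+\frac{\alpha}{2}\|x-x^k\|^2\}$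 with $\mathcal L^k_\sigma(x,\lambda):=F(x^k,\xi^k)+\langle v_0(x^k,\xi^k),x-x^k\rangle+\frac{1}{2\sigma}[\sum_{i=1}^p[\lambda_i+\sigma(G_i(x^k,\xi^k)+\langle v_i(x^k,\xi^k),x-x^k\rangle)]_+^2-\|\lambda\|^2]$, and $\lambda_i^{k+1}=[\lambda_i^k+\sigma(G_i(x^k,\xi^k)+\langle v_i(x^k,\xi^k),x^{k+1}-x^k\rangle)]_+$. Assumptions: (A1) $\|x'-x''\|\le R$ on $\mathcal C$. (A2) $\|G(x,\xi)\|\le\nu_g$ for all $x\in\mathcal C,\xi\in\Xi$. (A3) $\|v_0(x,\xi)\|\le\kappa_f$, $\|v_i(x,\xi)\|\le\kappa_g$ for all $x,\xi$. *)

theory Defs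
  imports "HOL-Analysis.Analysis" "HOL-Probability.Probability"
begin

definition pos_part :: "real \<Rightarrow> real" where
  "pos_part t = max t 0"

definition subgrad_on :: "'a::real_inner set \<Rightarrow> ('a \<Rightarrow> real) \<Rightarrow> 'a \<Rightarrow> 'a \<Rightarrow> bool" where
  "subgrad_on C g x v \<longleftrightarrow> (\<forall>y\<in>C. g y \<ge> g x + inner v (y - x))"

text \<open>Constraints are indexed by i = 1..p; multipliers
  are functions nat => real, only components 1..p are used.\<close>
definition lin_AL ::
  "('a::real_inner \<Rightarrow> 'q \<Rightarrow> real) \<Rightarrow> (nat \<Rightarrow> 'a \<Rightarrow> 'q \<Rightarrow> real) \<Rightarrow>
   ('a \<Rightarrow> 'q \<Rightarrow> 'a) \<Rightarrow> (nat \<Rightarrow> 'a \<Rightarrow> 'q \<Rightarrow> 'a) \<Rightarrow> nat \<Rightarrow> real \<Rightarrow>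
   'a \<Rightarrow> 'q \<Rightarrow> 'a \<Rightarrow> (nat \<Rightarrow> real) \<Rightarrow> real" where
  "lin_AL F G v0 v p \<sigma> xk e x lam =
     F xk e + inner (v0 xk e) (x - xk)
     + (1 / (2 * \<sigma>)) * ((\<Sum>i=1..p. (pos_part (lam i + \<sigma> * (G i xk e + inner (v i xk e) (x - xk))))\<^sup>2)
                       - (\<Sum>i=1..p. (lam i)\<^sup>2))"

end

theory Submission
  imports Defs
begin


lemma norm_add_scale_sq:
  fixes a b :: "'a::real_inner"
  shows "(norm (a + t *\<^sub>R b))\<^sup>2 = (norm a)\<^sup>2 + 2 * t * inner a b + t\<^sup>2 * (norm b)\<^sup>2"
  unfolding power2_norm_eq_inner
  by (simp add: inner_add_left inner_add_right inner_commute algebra_simps power2_eq_square)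

lemma three_point:
  fixes h :: "'a::real_inner \<Rightarrow> real"
  assumes cvx: "convex_on C h" and C: "convex C" and x1: "x1 \<in> C" and a: "a > 0"
    and mn: "\<forall>y\<in>C. h x1 + a/2 * (norm (x1 - xk))\<^sup>2 \<le> h y + a/2 * (norm (y - xk))\<^sup>2"
    and z: "z \<in> C"
  shows "h x1 + a/2 * (norm (x1 - xk))\<^sup>2 + a/2 * (norm (z - x1))\<^sup>2 \<le> h z + a/2 * (norm (z - xk))\<^sup>2"
proof -
  define I where "I = inner (x1 - xk) (z - x1)"
  define A where "A = h z - h x1 + a * I"
  define D where "D = (norm (z - x1))\<^sup>2"
  have D0: "D \<ge> 0" unfolding D_def by simp
  have key: "0 \<le> A + a/2 * t * D" if t: "0 < t" "t \<le> 1" for t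
  proof -
    define y where "y = (1 - t) *\<^sub>R x1 + t *\<^sub>R z"
    have yC: "y \<in> C" unfolding y_def using C x1 z t by (simp add: convex_def)
    have hy: "h y \<le> (1 - t) * h x1 + t * h z"
      unfolding y_def using convex_onD[OF cvx, of t x1 z] t x1 z by simp
    have ny: "(norm (y - xk))\<^sup>2 = (norm (x1 - xk))\<^sup>2 + 2 * t * I + t\<^sup>2 * D"
    proof -
      have "y - xk = (x1 - xk) + t *\<^sub>R (z - x1)" unfolding y_def by (simp add: algebra_simps)
      then show ?thesis unfolding D_def I_def by (metis norm_add_scale_sq)
    qed
    from mn yC have "h x1 + a/2 * (norm (x1 - xk))\<^sup>2 \<le> h y + a/2 * (norm (y - xk))\<^sup>2" by blast
    then have "h x1 + a/2 * (norm (x1 - xk))\<^sup>2 \<le> h y + a/2 * ((norm (x1 - xk))\<^sup>2 + 2 * t * I + t\<^sup>2 * D)"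
      by (simp only: ny)
    with hy have "h x1 + a/2 * (norm (x1 - xk))\<^sup>2 \<le> (1 - t) * h x1 + t * h z
       + a/2 * ((norm (x1 - xk))\<^sup>2 + 2 * t * I + t\<^sup>2 * D)" by linarith
    then have "0 \<le> t * A + a/2 * t\<^sup>2 * D"
      unfolding A_def by (simp add: algebra_simps)
    then have "0 \<le> t * (A + a/2 * t * D)" by (simp add: algebra_simps power2_eq_square)
    then show ?thesis using t by (simp add: zero_le_mult_iff)
  qed
  have A0: "A \<ge> 0"
  proof (rule ccontr)
    assume "\<not> A \<ge> 0"
    then have An: "A < 0" by simp
    show False
    proof (cases "D = 0")
      case True then show ?thesis using key[of 1] An by simp
    next
      case False
      then have Dp: "D > 0" using D0 by simp
      define t where "t = min 1 (- A / (a * D))"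
      have tp: "0 < t" "t \<le> 1" unfolding t_def using An Dp a by (auto simp: divide_neg_pos)
      have "t * (a * D) \<le> - A" unfolding t_def using An Dp a
        by (smt (verit, ccfv_SIG) min.cobounded2 mult_right_mono nonzero_eq_divide_eq zero_less_mult_iff)
      then have "a/2 * t * D \<le> - A / 2" by (simp add: algebra_simps)
      then show ?thesis using key[OF tp] An by linarith
    qed
  qed
  have e: "(norm (z - xk))\<^sup>2 = D + 2 * I + (norm (x1 - xk))\<^sup>2"
  proof -
    have "z - xk = (z - x1) + (x1 - xk)" by simp
    then show ?thesis using norm_add_scale_sq[of "z - x1" 1 "x1 - xk"] unfolding D_def I_def by (simp add: inner_commute)
  qed
  have "h z + a/2 * (norm (z - xk))\<^sup>2 = h z + a/2 * D + a * I + a/2 * (norm (x1 - xk))\<^sup>2"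
    by (simp only: e) (simp add: algebra_simps)
  then show ?thesis using A0 unfolding A_def D_def by linarith
qed



lemma pos_part_sq_convex:
  fixes a b t :: real
  assumes "0 \<le> t" "t \<le> 1"
  shows "(pos_part ((1 - t) * a + t * b))\<^sup>2 \<le> (1 - t) * (pos_part a)\<^sup>2 + t * (pos_part b)\<^sup>2"
proof -
  define A where "A = pos_part a"
  define B where "B = pos_part b"
  have A: "A \<ge> 0" "a \<le> A" and B: "B \<ge> 0" "b \<le> B" unfolding A_def B_def pos_part_def by auto
  have P0: "pos_part ((1 - t) * a + t * b) \<ge> 0" unfolding pos_part_def by auto
  have "(1 - t) * a + t * b \<le> (1 - t) * A + t * B"
    using A B assms by (intro add_mono mult_left_mono) auto
  then have P1: "pos_part ((1 - t) * a + t * b) \<le> (1 - t) * A + t * B"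
    unfolding pos_part_def using A B assms by auto
  have "(pos_part ((1 - t) * a + t * b))\<^sup>2 \<le> ((1 - t) * A + t * B)\<^sup>2"
    using P0 P1 by (intro power_mono) auto
  also have "\<dots> \<le> (1 - t) * A\<^sup>2 + t * B\<^sup>2"
  proof -
    have "(1 - t) * A\<^sup>2 + t * B\<^sup>2 - ((1 - t) * A + t * B)\<^sup>2 = t * (1 - t) * (A - B)\<^sup>2"
      by (simp add: algebra_simps power2_eq_square)
    moreover have "t * (1 - t) * (A - B)\<^sup>2 \<ge> 0" using assms by simp
    ultimately show ?thesis by linarith
  qed
  finally show ?thesis unfolding A_def B_def .
qed

lemma aux_cvx_arith:
  fixes c lx ly lxy k Sxy Sx Sy SL t :: real
  assumes "lxy = (1-t)*lx + t*ly" "k*Sxy \<le> k*((1-t)*Sx+t*Sy)"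
  shows "c + lxy + k*(Sxy - SL) \<le> (1-t)*(c+lx+k*(Sx-SL)) + t*(c+ly+k*(Sy-SL))"
proof -
  have "(1-t)*(c+lx+k*(Sx-SL)) + t*(c+ly+k*(Sy-SL)) = c + ((1-t)*lx + t*ly) + k*((1-t)*Sx+t*Sy) - k*SL"
    by (simp add: algebra_simps)
  then show ?thesis using assms by (simp add: algebra_simps)
qed

lemma lin_AL_convex:
  assumes "\<sigma> > 0"
  shows "convex_on UNIV (\<lambda>x. lin_AL F G v0 v p \<sigma> xk e x lam)"
proof (rule convex_onI)
  fix t :: real and x y :: 'a
  assume t: "0 < t" "t < 1"
  define L where "L = (\<lambda>i x. lam i + \<sigma> * (G i xk e + inner (v i xk e) (x - xk)))"
  have Laff: "L i ((1 - t) *\<^sub>R x + t *\<^sub>R y) = (1 - t) * L i x + t * L i y" for i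
    unfolding L_def by (simp add: algebra_simps inner_diff_right inner_add_right)
  have lin: "inner (v0 xk e) ((1 - t) *\<^sub>R x + t *\<^sub>R y - xk) = (1 - t) * inner (v0 xk e) (x - xk) + t * inner (v0 xk e) (y - xk)"
    by (simp add: algebra_simps inner_diff_right inner_add_right)
  have S: "(\<Sum>i=1..p. (pos_part (L i ((1 - t) *\<^sub>R x + t *\<^sub>R y)))\<^sup>2)
      \<le> (1 - t) * (\<Sum>i=1..p. (pos_part (L i x))\<^sup>2) + t * (\<Sum>i=1..p. (pos_part (L i y))\<^sup>2)"
    unfolding Laff sum_distrib_left sum.distrib[symmetric]
    using t by (intro sum_mono pos_part_sq_convex) auto
  have c: "1 / (2 * \<sigma>) \<ge> 0" using assms by simp
  have S': "1 / (2 * \<sigma>) * (\<Sum>i=1..p. (pos_part (L i ((1 - t) *\<^sub>R x + t *\<^sub>R y)))\<^sup>2)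
      \<le> 1 / (2 * \<sigma>) * ((1 - t) * (\<Sum>i=1..p. (pos_part (L i x))\<^sup>2) + t * (\<Sum>i=1..p. (pos_part (L i y))\<^sup>2))"
    using mult_left_mono[OF S c] .
  show "lin_AL F G v0 v p \<sigma> xk e ((1 - t) *\<^sub>R x + t *\<^sub>R y) lam
        \<le> (1 - t) * lin_AL F G v0 v p \<sigma> xk e x lam + t * lin_AL F G v0 v p \<sigma> xk e y lam"
  proof -
    have eq: "lin_AL F G v0 v p \<sigma> xk e z lam = F xk e + inner (v0 xk e) (z - xk)
       + 1 / (2 * \<sigma>) * ((\<Sum>i=1..p. (pos_part (L i z))\<^sup>2) - (\<Sum>i=1..p. (lam i)\<^sup>2))" for z
      by (simp add: lin_AL_def L_def)
    show ?thesis unfolding eq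
      by (rule aux_cvx_arith[OF lin S'])
  qed
qed simp



definition pick :: "('a \<Rightarrow> real) \<Rightarrow> 'a \<Rightarrow> 'a list \<Rightarrow> 'a" where
  "pick \<phi> d ds = foldr (\<lambda>x acc. if \<phi> x \<le> \<phi> acc then x else acc) ds d"

lemma pick_Cons: "pick \<phi> d (x # ds) = (if \<phi> x \<le> \<phi> (pick \<phi> d ds) then x else pick \<phi> d ds)"
  by (simp add: pick_def)

lemma pick_props: "pick \<phi> d ds \<in> set (d # ds) \<and> (\<forall>y\<in>set (d # ds). \<phi> (pick \<phi> d ds) \<le> \<phi> y)"
proof (induction ds)
  case Nil then show ?case by (simp add: pick_def)
next
  case (Cons x ds)
  then show ?case unfolding pick_Cons by (auto split: if_splits)
qed

lemma pick_meas:
  fixes \<psi> :: "'w \<Rightarrow> 'a::metric_space \<Rightarrow> real"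
  assumes "\<And>y. y \<in> set (d # ds) \<Longrightarrow> (\<lambda>\<omega>. \<psi> \<omega> y) \<in> borel_measurable N"
  shows "(\<lambda>\<omega>. pick (\<psi> \<omega>) d ds) \<in> borel_measurable N \<and> (\<lambda>\<omega>. \<psi> \<omega> (pick (\<psi> \<omega>) d ds)) \<in> borel_measurable N"
  using assms
proof (induction ds)
  case Nil then show ?case by (simp add: pick_def)
next
  case (Cons x ds)
  then have IH1: "(\<lambda>\<omega>. pick (\<psi> \<omega>) d ds) \<in> borel_measurable N"
    and IH2: "(\<lambda>\<omega>. \<psi> \<omega> (pick (\<psi> \<omega>) d ds)) \<in> borel_measurable N" by auto
  have x: "(\<lambda>\<omega>. \<psi> \<omega> x) \<in> borel_measurable N" using Cons.prems by simp
  have P: "{\<omega> \<in> space N. \<psi> \<omega> x \<le> \<psi> \<omega> (pick (\<psi> \<omega>) d ds)} \<in> sets N"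
    using x IH2 by measurable
  have 1: "(\<lambda>\<omega>. pick (\<psi> \<omega>) d (x # ds)) \<in> borel_measurable N"
    unfolding pick_Cons by (rule measurable_If[OF _ IH1 P]) simp
  have 2: "(\<lambda>\<omega>. \<psi> \<omega> (pick (\<psi> \<omega>) d (x # ds))) \<in> borel_measurable N"
  proof -
    have "(\<lambda>\<omega>. \<psi> \<omega> (pick (\<psi> \<omega>) d (x # ds))) = (\<lambda>\<omega>. if \<psi> \<omega> x \<le> \<psi> \<omega> (pick (\<psi> \<omega>) d ds) then \<psi> \<omega> x else \<psi> \<omega> (pick (\<psi> \<omega>) d ds))"
      unfolding pick_Cons by (simp add: fun_eq_iff)
    then show ?thesis using measurable_If[OF x IH2 P] by simp
  qed
  show ?case using 1 2 by simp
qed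

lemma argmin_meas:
  fixes m :: "'w \<Rightarrow> 'a::euclidean_space" and \<psi> :: "'w \<Rightarrow> 'a \<Rightarrow> real"
  assumes C: "compact C" "C \<noteq> {}" and a: "a > 0"
    and meas: "\<And>d. d \<in> C \<Longrightarrow> (\<lambda>\<omega>. \<psi> \<omega> d) \<in> borel_measurable N"
    and mC: "\<And>\<omega>. \<omega> \<in> space N \<Longrightarrow> m \<omega> \<in> C"
    and cont: "\<And>\<omega>. \<omega> \<in> space N \<Longrightarrow> continuous_on C (\<psi> \<omega>)"
    and grow: "\<And>\<omega> y. \<omega> \<in> space N \<Longrightarrow> y \<in> C \<Longrightarrow> \<psi> \<omega> (m \<omega>) + a * (norm (y - m \<omega>))\<^sup>2 \<le> \<psi> \<omega> y"
  shows "m \<in> borel_measurable N"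
proof -
  have "\<exists>L. L \<noteq> [] \<and> set L \<subseteq> C \<and> C \<subseteq> (\<Union>x\<in>set L. ball x (1 / Suc n))" for n
  proof -
    have "C \<subseteq> (\<Union>x\<in>C. ball x (1 / Suc n))" by (auto intro!: bexI)
    then obtain C' where C': "C' \<subseteq> C" "finite C'" "C \<subseteq> (\<Union>x\<in>C'. ball x (1 / Suc n))"
      using compactE_image[OF C(1), of C "\<lambda>x. ball x (1 / Suc n)"] by auto
    obtain L where "set L = C'" using finite_list[OF C'(2)] by blast
    moreover have "C' \<noteq> {}" using C'(3) C(2) by auto
    ultimately show ?thesis using C' by auto
  qed
  then obtain L where L: "\<And>n. L n \<noteq> [] \<and> set (L n) \<subseteq> C \<and> C \<subseteq> (\<Union>x\<in>set (L n). ball x (1 / Suc n))"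
    by metis
  have setL: "set (hd (L n) # tl (L n)) = set (L n)" for n using L[of n] by simp
  define mn where "mn n \<omega> = pick (\<psi> \<omega>) (hd (L n)) (tl (L n))" for n \<omega>
  have mn_meas: "mn n \<in> borel_measurable N" for n
    unfolding mn_def using pick_meas[of "hd (L n)" "tl (L n)" \<psi> N] meas L setL
    by (metis subsetD)
  have mn_props: "mn n \<omega> \<in> set (L n) \<and> (\<forall>y\<in>set (L n). \<psi> \<omega> (mn n \<omega>) \<le> \<psi> \<omega> y)" for n \<omega>
    unfolding mn_def using pick_props[of "\<psi> \<omega>" "hd (L n)" "tl (L n)"] setL[of n]
    by (metis (no_types, lifting))
  show ?thesis
  proof (rule borel_measurable_LIMSEQ_metric[OF mn_meas])
    fix \<omega> assume \<omega>: "\<omega> \<in> space N"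
    show "(\<lambda>n. mn n \<omega>) \<longlonglongrightarrow> m \<omega>"
    proof (rule metric_LIMSEQ_I)
      fix r :: real assume r: "r > 0"
      have "a * r\<^sup>2 > 0" using a r by simp
      then obtain \<delta> where \<delta>: "\<delta> > 0" "\<And>x'. x' \<in> C \<Longrightarrow> dist x' (m \<omega>) < \<delta> \<Longrightarrow> dist (\<psi> \<omega> x') (\<psi> \<omega> (m \<omega>)) < a * r\<^sup>2"
        using cont[OF \<omega>] mC[OF \<omega>] unfolding continuous_on_iff by metis
      obtain no where no: "inverse (real (Suc no)) < \<delta>" using reals_Archimedean[OF \<delta>(1)] by blast
      show "\<exists>no. \<forall>n\<ge>no. dist (mn n \<omega>) (m \<omega>) < r"
      proof (intro exI allI impI)
        fix n assume n: "no \<le> n"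
        have "1 / real (Suc n) \<le> 1 / real (Suc no)" using n by (simp add: frac_le)
        then have n\<delta>: "1 / real (Suc n) < \<delta>" using no by (simp add: inverse_eq_divide)
        obtain d where d: "d \<in> set (L n)" "dist d (m \<omega>) < 1 / Suc n"
          using L[of n] mC[OF \<omega>] by (auto simp: dist_commute)
        have dC: "d \<in> C" using d L by auto
        have mnC: "mn n \<omega> \<in> C" using mn_props L by blast
        have "\<psi> \<omega> d < \<psi> \<omega> (m \<omega>) + a * r\<^sup>2" using \<delta>(2)[OF dC] d(2) n\<delta> by (simp add: dist_real_def)
        moreover have "\<psi> \<omega> (mn n \<omega>) \<le> \<psi> \<omega> d" using mn_props d(1) by blast
        moreover have "\<psi> \<omega> (m \<omega>) + a * (norm (mn n \<omega> - m \<omega>))\<^sup>2 \<le> \<psi> \<omega> (mn n \<omega>)" using grow[OF \<omega> mnC] .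
        ultimately have "a * (norm (mn n \<omega> - m \<omega>))\<^sup>2 < a * r\<^sup>2" by linarith
        then have "(norm (mn n \<omega> - m \<omega>))\<^sup>2 < r\<^sup>2" using a by simp
        then have "norm (mn n \<omega> - m \<omega>) < r" using r by (simp add: power_less_imp_less_base)
        then show "dist (mn n \<omega>) (m \<omega>) < r" by (simp add: dist_norm)
      qed
    qed
  qed
qed



lemma young_aux:
  fixes a k d :: real assumes "a > 0"
  shows "- k * d + a/2 * d\<^sup>2 \<ge> - (k\<^sup>2 / (2 * a))"
proof -
  have "a/2 * (d - k/a)\<^sup>2 \<ge> 0" using assms by simp
  moreover have "a/2 * (d - k/a)\<^sup>2 = a/2 * d\<^sup>2 - k * d + k\<^sup>2 / (2 * a)"
    using assms by (simp add: power2_eq_square field_simps)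
  ultimately show ?thesis by linarith
qed

lemma step_ineq:
  fixes F :: "'a::euclidean_space \<Rightarrow> 'q \<Rightarrow> real"
  assumes \<sigma>: "\<sigma> > 0" and \<alpha>: "\<alpha> > 0" and C: "convex C"
    and x: "x \<in> C" and x1: "x1 \<in> C" and z: "z \<in> C"
    and sub0: "subgrad_on C (\<lambda>y. F y e) x (v0 x e)"
    and subi: "\<And>i. i \<in> {1..p} \<Longrightarrow> subgrad_on C (\<lambda>y. G i y e) x (v i x e)"
    and nv0: "norm (v0 x e) \<le> \<kappa>f"
    and A2z: "sqrt (\<Sum>i=1..p. (G i z e)\<^sup>2) \<le> \<nu>g"
    and lampos: "\<And>i. i \<in> {1..p} \<Longrightarrow> lam i \<ge> 0"
    and mn: "\<forall>y\<in>C. lin_AL F G v0 v p \<sigma> x e x1 lam + \<alpha>/2 * (norm (x1 - x))\<^sup>2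
                 \<le> lin_AL F G v0 v p \<sigma> x e y lam + \<alpha>/2 * (norm (y - x))\<^sup>2"
    and lam': "\<And>i. i \<in> {1..p} \<Longrightarrow> lam' i = pos_part (lam i + \<sigma> * (G i x e + inner (v i x e) (x1 - x)))"
  shows "F x e - F z e \<le> \<kappa>f\<^sup>2 / (2 * \<alpha>) + \<sigma> / 2 * \<nu>g\<^sup>2 + (\<Sum>i=1..p. lam i * G i z e)
          + \<alpha>/2 * ((norm (z - x))\<^sup>2 - (norm (z - x1))\<^sup>2)
          + 1 / (2 * \<sigma>) * ((\<Sum>i=1..p. (lam i)\<^sup>2) - (\<Sum>i=1..p. (lam' i)\<^sup>2))"
proof -
  define h where "h y = lin_AL F G v0 v p \<sigma> x e y lam" for y
  have cvx: "convex_on C h" unfolding h_def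
    by (rule convex_on_subset[OF lin_AL_convex[OF \<sigma>] _ C]) simp
  have TP: "h x1 + \<alpha>/2 * (norm (x1 - x))\<^sup>2 + \<alpha>/2 * (norm (z - x1))\<^sup>2 \<le> h z + \<alpha>/2 * (norm (z - x))\<^sup>2"
    using three_point[OF cvx C x1 \<alpha> _ z] mn unfolding h_def by blast
  define SL where "SL = (\<Sum>i=1..p. (lam i)\<^sup>2)"
  have hx1: "h x1 = F x e + inner (v0 x e) (x1 - x) + 1 / (2 * \<sigma>) * ((\<Sum>i=1..p. (lam' i)\<^sup>2) - SL)"
  proof -
    have "(\<Sum>i=1..p. (pos_part (lam i + \<sigma> * (G i x e + inner (v i x e) (x1 - x))))\<^sup>2) = (\<Sum>i=1..p. (lam' i)\<^sup>2)"
      using lam' by (intro sum.cong) auto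
    then show ?thesis unfolding h_def lin_AL_def SL_def by simp
  qed
  have lin0: "F x e + inner (v0 x e) (z - x) \<le> F z e"
    using sub0 z unfolding subgrad_on_def by auto
  have termi: "(pos_part (lam i + \<sigma> * (G i x e + inner (v i x e) (z - x))))\<^sup>2
      \<le> (lam i)\<^sup>2 + 2 * \<sigma> * (lam i * G i z e) + \<sigma>\<^sup>2 * (G i z e)\<^sup>2" if i: "i \<in> {1..p}" for i
  proof -
    have "G i x e + inner (v i x e) (z - x) \<le> G i z e"
      using subi[OF i] z unfolding subgrad_on_def by auto
    then have le: "lam i + \<sigma> * (G i x e + inner (v i x e) (z - x)) \<le> lam i + \<sigma> * G i z e"
      using \<sigma> by simp
    have "(pos_part (lam i + \<sigma> * (G i x e + inner (v i x e) (z - x))))\<^sup>2 \<le> (pos_part (lam i + \<sigma> * G i z e))\<^sup>2"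
      using le unfolding pos_part_def by (intro power_mono) auto
    also have "\<dots> \<le> (lam i + \<sigma> * G i z e)\<^sup>2" unfolding pos_part_def
      by (cases "lam i + \<sigma> * G i z e \<ge> 0") (auto simp: max_def)
    also have "\<dots> = (lam i)\<^sup>2 + 2 * \<sigma> * (lam i * G i z e) + \<sigma>\<^sup>2 * (G i z e)\<^sup>2"
      by (simp add: power2_eq_square algebra_simps)
    finally show ?thesis .
  qed
  define SG where "SG = (\<Sum>i=1..p. (G i z e)\<^sup>2)"
  define SLG where "SLG = (\<Sum>i=1..p. lam i * G i z e)"
  have Ssum: "(\<Sum>i=1..p. (pos_part (lam i + \<sigma> * (G i x e + inner (v i x e) (z - x))))\<^sup>2)
      \<le> SL + 2 * \<sigma> * SLG + \<sigma>\<^sup>2 * SG"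
  proof -
    have "(\<Sum>i=1..p. (pos_part (lam i + \<sigma> * (G i x e + inner (v i x e) (z - x))))\<^sup>2)
        \<le> (\<Sum>i=1..p. (lam i)\<^sup>2 + 2 * \<sigma> * (lam i * G i z e) + \<sigma>\<^sup>2 * (G i z e)\<^sup>2)"
      by (rule sum_mono) (rule termi)
    also have "\<dots> = SL + 2 * \<sigma> * SLG + \<sigma>\<^sup>2 * SG"
      unfolding SL_def SLG_def SG_def by (simp add: sum.distrib sum_distrib_left)
    finally show ?thesis .
  qed
  have SG_le: "SG \<le> \<nu>g\<^sup>2"
  proof -
    have "SG \<ge> 0" unfolding SG_def by (simp add: sum_nonneg)
    then have "SG = (sqrt SG)\<^sup>2" by simp
    also have "\<dots> \<le> \<nu>g\<^sup>2" using A2z unfolding SG_def by (intro power_mono) (auto simp: sum_nonneg)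
    finally show ?thesis .
  qed
  have hz: "h z \<le> F z e + SLG + \<sigma> / 2 * \<nu>g\<^sup>2"
  proof -
    have "h z = F x e + inner (v0 x e) (z - x) + 1 / (2 * \<sigma>) *
        ((\<Sum>i=1..p. (pos_part (lam i + \<sigma> * (G i x e + inner (v i x e) (z - x))))\<^sup>2) - SL)"
      unfolding h_def lin_AL_def SL_def by simp
    also have "\<dots> \<le> F z e + 1 / (2 * \<sigma>) * (2 * \<sigma> * SLG + \<sigma>\<^sup>2 * SG)"
      using lin0 Ssum \<sigma> by (intro add_mono mult_left_mono) auto
    also have "1 / (2 * \<sigma>) * (2 * \<sigma> * SLG + \<sigma>\<^sup>2 * SG) = SLG + \<sigma> / 2 * SG"
      using \<sigma> by (simp add: field_simps power2_eq_square)
    also have "F z e + (SLG + \<sigma> / 2 * SG) \<le> F z e + SLG + \<sigma> / 2 * \<nu>g\<^sup>2"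
      using SG_le \<sigma> by simp
    finally show ?thesis by simp
  qed
  have inn: "inner (v0 x e) (x1 - x) \<ge> - \<kappa>f * norm (x1 - x)"
  proof -
    have "\<bar>inner (v0 x e) (x1 - x)\<bar> \<le> norm (v0 x e) * norm (x1 - x)" by (rule Cauchy_Schwarz_ineq2)
    also have "\<dots> \<le> \<kappa>f * norm (x1 - x)" using nv0 by (intro mult_right_mono) auto
    finally show ?thesis by linarith
  qed
  have yo: "- \<kappa>f * norm (x1 - x) + \<alpha>/2 * (norm (x1 - x))\<^sup>2 \<ge> - (\<kappa>f\<^sup>2 / (2 * \<alpha>))"
    by (rule young_aux[OF \<alpha>])
  show ?thesis
    using TP hx1 hz inn yo unfolding SLG_def[symmetric] SL_def[symmetric]
    by (simp add: algebra_simps) linarith?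
qed



lemma meas_comp2:
  fixes h :: "'a::second_countable_topology \<Rightarrow> 'b::second_countable_topology \<Rightarrow> 'c::topological_space"
  assumes h: "(\<lambda>(x, e). h x e) \<in> borel_measurable borel"
    and X: "X \<in> borel_measurable N" and E: "E \<in> borel_measurable N"
  shows "(\<lambda>\<omega>. h (X \<omega>) (E \<omega>)) \<in> borel_measurable N"
proof -
  have "(\<lambda>\<omega>. (X \<omega>, E \<omega>)) \<in> measurable N (borel \<Otimes>\<^sub>M borel)" using X E by (rule measurable_Pair)
  then have P: "(\<lambda>\<omega>. (X \<omega>, E \<omega>)) \<in> measurable N borel" by (simp add: borel_prod)
  from measurable_compose[OF P h] show ?thesis by simp
qed

definition past :: "'w measure \<Rightarrow> (nat \<Rightarrow> 'w \<Rightarrow> 'q::topological_space) \<Rightarrow> nat \<Rightarrow> 'w measure" where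
  "past M \<xi>s k = sigma (space M) (\<Union>i\<in>{..<k}. {\<xi>s i -` A \<inter> space M | A. A \<in> sets borel})"

lemma past_gen_sub: "(\<Union>i\<in>{..<k}. {\<xi>s i -` A \<inter> space M | A. A \<in> sets borel}) \<subseteq> Pow (space M)"
  by auto

lemma space_past[simp]: "space (past M \<xi>s k) = space M"
  unfolding past_def by (rule space_measure_of) auto

lemma sets_past: "sets (past M \<xi>s k) = sigma_sets (space M) (\<Union>i\<in>{..<k}. {\<xi>s i -` A \<inter> space M | A. A \<in> sets borel})"
  unfolding past_def by (rule sets_measure_of) auto

lemma past_subalg:
  assumes "\<And>k. \<xi>s k \<in> borel_measurable M"
  shows "subalgebra M (past M \<xi>s k)"
  unfolding subalgebra_def
proof
  show "sets (past M \<xi>s k) \<subseteq> sets M" unfolding sets_past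
    using assms by (intro sets.sigma_sets_subset) (auto simp: measurable_sets)
qed simp

lemma past_mono: "subalgebra (past M \<xi>s (Suc k)) (past M \<xi>s k)"
  unfolding subalgebra_def sets_past
  by (auto intro!: sigma_sets_mono' intro: less_SucI)

lemma past_meas: "j < k \<Longrightarrow> \<xi>s j \<in> borel_measurable (past M \<xi>s k)"
  by (rule measurableI) (auto simp: sets_past intro!: sigma_sets.Basic)

lemma indep_from_past:
  fixes \<xi>s :: "nat \<Rightarrow> 'w \<Rightarrow> 'q::topological_space"
  assumes M: "prob_space M" and ind: "prob_space.indep_vars M (\<lambda>_. borel) \<xi>s UNIV"
    and meas: "\<And>k. \<xi>s k \<in> borel_measurable M"
    and Y: "Y \<in> measurable (past M \<xi>s k) (borel :: 'b::topological_space measure)"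
    and \<phi>: "\<phi> \<in> measurable (borel :: 'q measure) (borel :: 'b measure)"
  shows "prob_space.indep_var M borel Y borel (\<lambda>\<omega>. \<phi> (\<xi>s k \<omega>))"
proof -
  interpret prob_space M by (rule M)
  define E where "E i = {\<xi>s i -` A \<inter> space M | A. A \<in> sets borel}" for i
  have indE: "indep_sets E UNIV" using ind unfolding indep_vars_def2 E_def by simp
  define J where "J b = (if b then {..<k} else {k})" for b :: bool
  have IS: "Int_stable (E i)" for i
  proof (rule Int_stableI)
    fix a b assume "a \<in> E i" "b \<in> E i"
    then obtain A B where AB: "A \<in> sets borel" "B \<in> sets borel" "a = \<xi>s i -` A \<inter> space M" "b = \<xi>s i -` B \<inter> space M"
      unfolding E_def by auto
    then have "a \<inter> b = \<xi>s i -` (A \<inter> B) \<inter> space M" by auto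
    then show "a \<inter> b \<in> E i" unfolding E_def using AB by blast
  qed
  have coll: "indep_sets (\<lambda>b. sigma_sets (space M) (\<Union>i\<in>J b. E i)) UNIV"
    by (rule indep_sets_collect_sigma) (auto intro: indep_sets_mono_index[OF _ indE] IS
        simp: disjoint_family_on_def J_def)
  have YM: "Y \<in> measurable M borel"
    using measurable_from_subalg[OF past_subalg[OF meas] Y] .
  show ?thesis
    unfolding indep_var_def indep_vars_def2
  proof
    show "\<forall>i\<in>UNIV. random_variable (case_bool borel borel i) (case_bool Y (\<lambda>\<omega>. \<phi> (\<xi>s k \<omega>)) i)"
      using YM measurable_compose[OF meas \<phi>] by (auto split: bool.split)
    show "indep_sets (\<lambda>i. {case_bool Y (\<lambda>\<omega>. \<phi> (\<xi>s k \<omega>)) i -` A \<inter> space M |A. A \<in> sets (case_bool borel borel i)}) UNIV"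
    proof (rule indep_sets_mono_sets[OF coll])
      fix b :: bool
      show "{case_bool Y (\<lambda>\<omega>. \<phi> (\<xi>s k \<omega>)) b -` A \<inter> space M |A. A \<in> sets (case_bool borel borel b)}
          \<subseteq> sigma_sets (space M) (\<Union>i\<in>J b. E i)"
      proof (cases b)
        case True
        have "Y -` A \<inter> space M \<in> sigma_sets (space M) (\<Union>i\<in>{..<k}. E i)" if "A \<in> sets borel" for A
          using measurable_sets[OF Y that] unfolding sets_past E_def by simp
        then show ?thesis using True by (auto simp: J_def)
      next
        case False
        have "(\<lambda>\<omega>. \<phi> (\<xi>s k \<omega>)) -` A \<inter> space M \<in> sigma_sets (space M) (E k)" if "A \<in> sets borel" for A
        proof -
          have "(\<lambda>\<omega>. \<phi> (\<xi>s k \<omega>)) -` A \<inter> space M = \<xi>s k -` (\<phi> -` A \<inter> space borel) \<inter> space M" by auto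
          moreover have "\<phi> -` A \<inter> space borel \<in> sets borel" using measurable_sets[OF \<phi> that] .
          ultimately show ?thesis unfolding E_def by (auto intro!: sigma_sets.Basic)
        qed
        then show ?thesis using False by (auto simp: J_def)
      qed
    qed
  qed
qed

lemma indep_integral_comp:
  fixes X :: "'w \<Rightarrow> 'a::euclidean_space" and E :: "'w \<Rightarrow> 'a"
    and H :: "'a \<Rightarrow> 'a \<Rightarrow> real"
  assumes M: "prob_space M" and ind: "prob_space.indep_var M borel X borel E"
    and H: "(\<lambda>(x, e). H x e) \<in> borel_measurable borel"
    and int: "integrable M (\<lambda>\<omega>. H (X \<omega>) (E \<omega>))"
  shows "(\<integral>\<omega>. H (X \<omega>) (E \<omega>) \<partial>M) = (\<integral>\<omega>. (\<integral>\<omega>'. H (X \<omega>) (E \<omega>') \<partial>M) \<partial>M)"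
proof -
  interpret prob_space M by (rule M)
  from ind have rvX: "X \<in> borel_measurable M" and rvE: "E \<in> borel_measurable M"
    and deq: "distr M borel X \<Otimes>\<^sub>M distr M borel E = distr M (borel \<Otimes>\<^sub>M borel) (\<lambda>x. (X x, E x))"
    unfolding indep_var_distribution_eq by auto
  define P where "P = distr M borel X"
  define Q where "Q = distr M borel E"
  interpret P: prob_space P unfolding P_def by (rule prob_space_distr[OF rvX])
  interpret Q: prob_space Q unfolding Q_def by (rule prob_space_distr[OF rvE])
  interpret PQ: pair_sigma_finite P Q ..
  have Hp: "(\<lambda>(x, e). H x e) \<in> borel_measurable (borel \<Otimes>\<^sub>M borel)" using H by (simp add: borel_prod)
  have pm: "(\<lambda>x. (X x, E x)) \<in> measurable M (borel \<Otimes>\<^sub>M borel)" using rvX rvE by (rule measurable_Pair)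
  have "(\<integral>\<omega>. H (X \<omega>) (E \<omega>) \<partial>M) = integral\<^sup>L (distr M (borel \<Otimes>\<^sub>M borel) (\<lambda>x. (X x, E x))) (\<lambda>(x, e). H x e)"
    by (subst integral_distr[OF pm Hp]) simp
  also have "\<dots> = integral\<^sup>L (P \<Otimes>\<^sub>M Q) (\<lambda>(x, e). H x e)"
    unfolding P_def Q_def deq ..
  also have "\<dots> = (\<integral>x. (\<integral>e. H x e \<partial>Q) \<partial>P)"
  proof -
    have "integrable (distr M (borel \<Otimes>\<^sub>M borel) (\<lambda>x. (X x, E x))) (\<lambda>(x, e). H x e)"
      by (subst integrable_distr_eq[OF pm Hp]) (simp add: int)
    then have "integrable (P \<Otimes>\<^sub>M Q) (\<lambda>(x, e). H x e)" unfolding P_def Q_def deq .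
    from PQ.integral_fst'[OF this] show ?thesis by simp
  qed
  also have "\<dots> = (\<integral>x. (\<integral>\<omega>'. H x (E \<omega>') \<partial>M) \<partial>P)"
  proof -
    have "(\<lambda>e. H x e) \<in> borel_measurable borel" for x
      using measurable_compose[OF measurable_Pair[OF measurable_const[of x] measurable_ident_sets[OF refl]] Hp] by simp
    then show ?thesis unfolding Q_def by (subst integral_distr[OF rvE]) auto
  qed
  also have "\<dots> = (\<integral>\<omega>. (\<integral>\<omega>'. H (X \<omega>) (E \<omega>') \<partial>M) \<partial>M)"
  proof -
    have "case_prod (\<lambda>x \<omega>'. H x (E \<omega>')) \<in> borel_measurable (borel \<Otimes>\<^sub>M M)"
      using measurable_compose[OF measurable_Pair[OF measurable_fst measurable_compose[OF measurable_snd rvE]] Hp]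
      by (simp add: split_beta')
    then have "(\<lambda>x. \<integral>\<omega>'. H x (E \<omega>') \<partial>M) \<in> borel_measurable borel"
      by (rule borel_measurable_lebesgue_integral)
    then show ?thesis unfolding P_def by (subst integral_distr[OF rvX]) auto
  qed
  finally show ?thesis .
qed



lemma lin_AL_cont: "continuous_on UNIV (\<lambda>x. lin_AL F G v0 v p \<sigma> xk e x lam)"
  unfolding lin_AL_def pos_part_def by (intro continuous_intros)

lemma pos_part_meas[measurable]: "pos_part \<in> borel_measurable borel"
  unfolding pos_part_def by measurable

lemma lin_AL_meas:
  fixes F :: "'a::euclidean_space \<Rightarrow> 'q::euclidean_space \<Rightarrow> real"
  assumes F_meas: "(\<lambda>(x, e). F x e) \<in> borel_measurable borel"
    and G_meas: "\<And>i. i \<in> {1..p} \<Longrightarrow> (\<lambda>(x, e). G i x e) \<in> borel_measurable borel"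
    and v0_meas: "(\<lambda>(x, e). v0 x e) \<in> borel_measurable borel"
    and v_meas: "\<And>i. i \<in> {1..p} \<Longrightarrow> (\<lambda>(x, e). v i x e) \<in> borel_measurable borel"
    and X: "X \<in> borel_measurable N" and E: "E \<in> borel_measurable N" and Y: "Y \<in> borel_measurable N"
    and L: "\<And>i. i \<in> {1..p} \<Longrightarrow> (\<lambda>\<omega>. Lm \<omega> i) \<in> borel_measurable N"
  shows "(\<lambda>\<omega>. lin_AL F G v0 v p \<sigma> (X \<omega>) (E \<omega>) (Y \<omega>) (Lm \<omega>)) \<in> borel_measurable N"
proof -
  have f1: "(\<lambda>\<omega>. F (X \<omega>) (E \<omega>)) \<in> borel_measurable N" by (rule meas_comp2[OF F_meas X E])
  have f2: "(\<lambda>\<omega>. v0 (X \<omega>) (E \<omega>)) \<in> borel_measurable N" by (rule meas_comp2[OF v0_meas X E])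
  have f3: "(\<lambda>\<omega>. G i (X \<omega>) (E \<omega>)) \<in> borel_measurable N" if "i \<in> {1..p}" for i
    by (rule meas_comp2[OF G_meas[OF that] X E])
  have f4: "(\<lambda>\<omega>. v i (X \<omega>) (E \<omega>)) \<in> borel_measurable N" if "i \<in> {1..p}" for i
    by (rule meas_comp2[OF v_meas[OF that] X E])
  have s1: "(\<lambda>\<omega>. \<Sum>i=1..p. (pos_part (Lm \<omega> i + \<sigma> * (G i (X \<omega>) (E \<omega>) + inner (v i (X \<omega>) (E \<omega>)) (Y \<omega> - X \<omega>))))\<^sup>2) \<in> borel_measurable N"
  proof (rule borel_measurable_sum)
    fix i assume i: "i \<in> {1..p}"
    note [measurable] = f3[OF i] f4[OF i] L[OF i] X Y
    show "(\<lambda>\<omega>. (pos_part (Lm \<omega> i + \<sigma> * (G i (X \<omega>) (E \<omega>) + inner (v i (X \<omega>) (E \<omega>)) (Y \<omega> - X \<omega>))))\<^sup>2) \<in> borel_measurable N"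
      by measurable
  qed
  have s2: "(\<lambda>\<omega>. \<Sum>i=1..p. (Lm \<omega> i)\<^sup>2) \<in> borel_measurable N"
    by (rule borel_measurable_sum) (use L in measurable)
  note [measurable] = f1 f2 s1 s2 X Y
  show ?thesis unfolding lin_AL_def by measurable
qed



theorem lemma8:
  fixes M :: "'w measure"
    and \<xi> :: "'w \<Rightarrow> 'q::euclidean_space"
    and \<xi>s :: "nat \<Rightarrow> 'w \<Rightarrow> 'q"
    and \<Xi> :: "'q set"
    and C :: "'a::euclidean_space set"
    and F :: "'a \<Rightarrow> 'q \<Rightarrow> real"
    and G :: "nat \<Rightarrow> 'a \<Rightarrow> 'q \<Rightarrow> real"
    and v0 :: "'a \<Rightarrow> 'q \<Rightarrow> 'a"
    and v :: "nat \<Rightarrow> 'a \<Rightarrow> 'q \<Rightarrow> 'a"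
    and p :: nat
    and \<sigma> \<alpha> R \<nu>g \<kappa>f \<kappa>g :: real
    and x0 :: 'a
    and xs :: "nat \<Rightarrow> 'w \<Rightarrow> 'a"
    and lam :: "nat \<Rightarrow> 'w \<Rightarrow> nat \<Rightarrow> real"
    and K :: nat
    and z :: 'a
  assumes M: "prob_space M"
    \<comment> \<open>the random vector xi, supported on Xi, and i.i.d. copies xi^0, xi^1, ...\<close>
    and \<xi>_meas: "\<xi> \<in> borel_measurable M"
    and \<Xi>_borel: "\<Xi> \<in> sets borel"
    and \<xi>_supp: "AE \<omega> in M. \<xi> \<omega> \<in> \<Xi>"
    and \<xi>s_meas: "\<And>k. \<xi>s k \<in> borel_measurable M"
    and \<xi>s_indep: "prob_space.indep_vars M (\<lambda>_. borel) \<xi>s UNIV"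
    and \<xi>s_distr: "\<And>k. distr M borel (\<xi>s k) = distr M borel \<xi>"
    \<comment> \<open>the set C\<close>
    and C: "compact C" "convex C" "C \<noteq> {}"
    \<comment> \<open>(implicit) measurability of the data\<close>
    and F_meas: "(\<lambda>(x, e). F x e) \<in> borel_measurable borel"
    and G_meas: "\<And>i. i \<in> {1..p} \<Longrightarrow> (\<lambda>(x, e). G i x e) \<in> borel_measurable borel"
    and v0_meas: "(\<lambda>(x, e). v0 x e) \<in> borel_measurable borel"
    and v_meas: "\<And>i. i \<in> {1..p} \<Longrightarrow> (\<lambda>(x, e). v i x e) \<in> borel_measurable borel"
    \<comment> \<open>convexity and continuity in x\<close>
    and F_cvx: "\<And>e. e \<in> \<Xi> \<Longrightarrow> convex_on C (\<lambda>x. F x e) \<and> continuous_on C (\<lambda>x. F x e)"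
    and G_cvx: "\<And>i e. i \<in> {1..p} \<Longrightarrow> e \<in> \<Xi> \<Longrightarrow>
                  convex_on C (\<lambda>x. G i x e) \<and> continuous_on C (\<lambda>x. G i x e)"
    \<comment> \<open>f and g_i finite on C\<close>
    and F_int: "\<And>x. x \<in> C \<Longrightarrow> integrable M (\<lambda>\<omega>. F x (\<xi> \<omega>))"
    and G_int: "\<And>i x. i \<in> {1..p} \<Longrightarrow> x \<in> C \<Longrightarrow> integrable M (\<lambda>\<omega>. G i x (\<xi> \<omega>))"
    \<comment> \<open>stochastic subgradients\<close>
    and v0_sub: "\<And>x e. x \<in> C \<Longrightarrow> e \<in> \<Xi> \<Longrightarrow> subgrad_on C (\<lambda>y. F y e) x (v0 x e)"
    and v_sub: "\<And>i x e. i \<in> {1..p} \<Longrightarrow> x \<in> C \<Longrightarrow> e \<in> \<Xi> \<Longrightarrow>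
                  subgrad_on C (\<lambda>y. G i y e) x (v i x e)"
    \<comment> \<open>(A1)--(A3)\<close>
    and A1: "\<And>x' x''. x' \<in> C \<Longrightarrow> x'' \<in> C \<Longrightarrow> norm (x' - x'') \<le> R"
    and A2: "\<And>x e. x \<in> C \<Longrightarrow> e \<in> \<Xi> \<Longrightarrow> sqrt (\<Sum>i=1..p. (G i x e)\<^sup>2) \<le> \<nu>g"
    and A3f: "\<And>x e. x \<in> C \<Longrightarrow> e \<in> \<Xi> \<Longrightarrow> norm (v0 x e) \<le> \<kappa>f"
    and A3g: "\<And>i x e. i \<in> {1..p} \<Longrightarrow> x \<in> C \<Longrightarrow> e \<in> \<Xi> \<Longrightarrow> norm (v i x e) \<le> \<kappa>g"
    \<comment> \<open>SLPMM with parameters sigma, alpha > 0\<close>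
    and \<sigma>_pos: "\<sigma> > 0" and \<alpha>_pos: "\<alpha> > 0"
    and x0: "x0 \<in> C"
    and xs0: "\<And>\<omega>. \<omega> \<in> space M \<Longrightarrow> xs 0 \<omega> = x0"
    and lam0: "\<And>\<omega> i. \<omega> \<in> space M \<Longrightarrow> i \<in> {1..p} \<Longrightarrow> lam 0 \<omega> i = 0"
    and xs_step: "\<And>k \<omega>. \<omega> \<in> space M \<Longrightarrow>
        xs (Suc k) \<omega> \<in> C \<and>
        (\<forall>y\<in>C. lin_AL F G v0 v p \<sigma> (xs k \<omega>) (\<xi>s k \<omega>) (xs (Suc k) \<omega>) (lam k \<omega>)
                   + \<alpha> / 2 * (norm (xs (Suc k) \<omega> - xs k \<omega>))\<^sup>2
                 \<le> lin_AL F G v0 v p \<sigma> (xs k \<omega>) (\<xi>s k \<omega>) y (lam k \<omega>)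
                   + \<alpha> / 2 * (norm (y - xs k \<omega>))\<^sup>2)"
    and lam_step: "\<And>k \<omega> i. \<omega> \<in> space M \<Longrightarrow> i \<in> {1..p} \<Longrightarrow>
        lam (Suc k) \<omega> i = pos_part (lam k \<omega> i + \<sigma> * (G i (xs k \<omega>) (\<xi>s k \<omega>)
                 + inner (v i (xs k \<omega>) (\<xi>s k \<omega>)) (xs (Suc k) \<omega> - xs k \<omega>)))"
    and K: "K \<ge> 1"
    \<comment> \<open>z feasible: z in C and g_i(z) <= 0\<close>
    and z: "z \<in> C" "\<And>i. i \<in> {1..p} \<Longrightarrow> (\<integral>\<omega>. G i z (\<xi> \<omega>) \<partial>M) \<le> 0"
  shows "(\<integral>\<omega>. (\<integral>\<omega>'. F ((1 / real K) *\<^sub>R (\<Sum>k<K. xs k \<omega>)) (\<xi> \<omega>') \<partial>M) \<partial>M)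
           - (\<integral>\<omega>'. F z (\<xi> \<omega>') \<partial>M)
         \<le> \<kappa>f\<^sup>2 / (2 * \<alpha>) + \<sigma> / 2 * \<nu>g\<^sup>2 + \<alpha> / (2 * real K) * R\<^sup>2"
proof -
  interpret prob_space M by (rule M)
  have Xi_ne: "\<Xi> \<noteq> {}"
  proof
    assume "\<Xi> = {}"
    then have "AE \<omega> in M. False" using \<xi>_supp by simp
    then show False by (simp add: AE_False)
  qed
  then obtain e0 where e0: "e0 \<in> \<Xi>" by blast
  have kf0: "\<kappa>f \<ge> 0" using A3f[OF x0 e0] norm_ge_zero[of "v0 x0 e0"] by linarith
  have ng0: "\<nu>g \<ge> 0"
  proof -
    have "0 \<le> sqrt (\<Sum>i=1..p. (G i x0 e0)\<^sup>2)" by (simp add: sum_nonneg)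
    then show ?thesis using A2[OF x0 e0] by linarith
  qed
  have R0: "R \<ge> 0" using A1[OF x0 x0] by simp
  have xsC: "xs k \<omega> \<in> C" if "\<omega> \<in> space M" for k \<omega>
    using that xs0 x0 xs_step by (cases k) auto
  have lam_nn: "lam k \<omega> i \<ge> 0" if "\<omega> \<in> space M" "i \<in> {1..p}" for k \<omega> i
    using that lam0 lam_step by (cases k) (auto simp: pos_part_def)
  have AE_k: "AE \<omega> in M. \<xi>s k \<omega> \<in> \<Xi>" for k
  proof -
    have "AE e in distr M borel \<xi>. e \<in> \<Xi>" using \<xi>_supp \<Xi>_borel by (subst AE_distr_iff[OF \<xi>_meas]) auto
    then have "AE e in distr M borel (\<xi>s k). e \<in> \<Xi>" by (simp only: \<xi>s_distr)
    then show ?thesis using \<Xi>_borel by (subst (asm) AE_distr_iff[OF \<xi>s_meas]) auto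
  qed
  have AE_all: "AE \<omega> in M. \<forall>k. \<xi>s k \<omega> \<in> \<Xi>" using AE_k by (simp add: AE_all_countable)
  have dint: "(\<integral>\<omega>. h (\<xi>s k \<omega>) \<partial>M) = (\<integral>\<omega>. h (\<xi> \<omega>) \<partial>M)"
    and dintg: "integrable M (\<lambda>\<omega>. h (\<xi>s k \<omega>)) \<longleftrightarrow> integrable M (\<lambda>\<omega>. h (\<xi> \<omega>))"
    if h: "(h :: 'q \<Rightarrow> real) \<in> borel_measurable borel" for h k
  proof -
    show "(\<integral>\<omega>. h (\<xi>s k \<omega>) \<partial>M) = (\<integral>\<omega>. h (\<xi> \<omega>) \<partial>M)"
      using integral_distr[OF \<xi>s_meas h, of k] integral_distr[OF \<xi>_meas h] \<xi>s_distr[of k] by simp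
    show "integrable M (\<lambda>\<omega>. h (\<xi>s k \<omega>)) \<longleftrightarrow> integrable M (\<lambda>\<omega>. h (\<xi> \<omega>))"
      using integrable_distr_eq[OF \<xi>s_meas h, of k] integrable_distr_eq[OF \<xi>_meas h] \<xi>s_distr[of k] by simp
  qed
  have Fx_meas: "(\<lambda>e. F x e) \<in> borel_measurable borel" for x
    using meas_comp2[OF F_meas measurable_const[of x borel] measurable_ident_sets[OF refl]] by simp
  have Gx_meas: "(\<lambda>e. G i x e) \<in> borel_measurable borel" if "i \<in> {1..p}" for x i
    using meas_comp2[OF G_meas[OF that] measurable_const[of x borel] measurable_ident_sets[OF refl]] by simp
  have Flip: "\<bar>F x e - F y e\<bar> \<le> \<kappa>f * norm (x - y)" if "x \<in> C" "y \<in> C" "e \<in> \<Xi>" for x y e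
  proof -
    have a: "F x e \<ge> F y e + inner (v0 y e) (x - y)" using v0_sub[OF that(2,3)] that(1) unfolding subgrad_on_def by auto
    have b: "F y e \<ge> F x e + inner (v0 x e) (y - x)" using v0_sub[OF that(1,3)] that(2) unfolding subgrad_on_def by auto
    have c: "\<bar>inner (v0 y e) (x - y)\<bar> \<le> \<kappa>f * norm (x - y)"
      using Cauchy_Schwarz_ineq2[of "v0 y e" "x - y"] A3f[OF that(2,3)] by (meson mult_right_mono norm_ge_zero order_trans)
    have d: "\<bar>inner (v0 x e) (y - x)\<bar> \<le> \<kappa>f * norm (x - y)"
      using Cauchy_Schwarz_ineq2[of "v0 x e" "y - x"] A3f[OF that(1,3)] by (metis mult_right_mono norm_ge_zero order_trans norm_minus_commute)
    show ?thesis using a b c d by linarith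
  qed
  have Fbd: "\<bar>F x e - F x0 e\<bar> \<le> \<kappa>f * R" if "x \<in> C" "e \<in> \<Xi>" for x e
    using Flip[OF that(1) x0 that(2)] A1[OF that(1) x0] kf0 by (meson mult_left_mono order_trans)
  define f where "f x = (\<integral>\<omega>'. F x (\<xi> \<omega>') \<partial>M)" for x
  have f_meas: "f \<in> borel_measurable borel"
  proof -
    have "case_prod (\<lambda>x \<omega>'. F x (\<xi> \<omega>')) \<in> borel_measurable (borel \<Otimes>\<^sub>M M)"
      using meas_comp2[OF F_meas measurable_fst measurable_compose[OF measurable_snd \<xi>_meas]]
      by (simp add: split_beta')
    then show ?thesis unfolding f_def by (rule borel_measurable_lebesgue_integral)
  qed
  have fbd: "\<bar>f x - f x0\<bar> \<le> \<kappa>f * R" if x: "x \<in> C" for x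
  proof -
    have i1: "integrable M (\<lambda>\<omega>. F x (\<xi> \<omega>))" "integrable M (\<lambda>\<omega>. F x0 (\<xi> \<omega>))" using F_int x x0 by auto
    have "f x - f x0 = (\<integral>\<omega>. F x (\<xi> \<omega>) - F x0 (\<xi> \<omega>) \<partial>M)" unfolding f_def using i1 by simp
    moreover have "(\<integral>\<omega>. F x (\<xi> \<omega>) - F x0 (\<xi> \<omega>) \<partial>M) \<le> (\<integral>\<omega>. \<kappa>f * R \<partial>M)"
      using \<xi>_supp Fbd[OF x] i1 by (intro integral_mono_AE) (auto elim!: eventually_mono simp: abs_le_iff)
    moreover have "(\<integral>\<omega>. - (\<kappa>f * R) \<partial>M) \<le> (\<integral>\<omega>. F x (\<xi> \<omega>) - F x0 (\<xi> \<omega>) \<partial>M)"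
    proof (intro integral_mono_AE)
      show "AE \<omega> in M. - (\<kappa>f * R) \<le> F x (\<xi> \<omega>) - F x0 (\<xi> \<omega>)"
        using \<xi>_supp by (rule eventually_mono) (use Fbd[OF x] in \<open>force simp: abs_le_iff\<close>)
    qed (use i1 in auto)
    ultimately show ?thesis by (simp add: abs_le_iff prob_space)
  qed
  have fcomp_int: "integrable M (\<lambda>\<omega>. f (Y \<omega>))" if Y: "Y \<in> borel_measurable M" "\<And>\<omega>. \<omega> \<in> space M \<Longrightarrow> Y \<omega> \<in> C" for Y
  proof (rule integrable_const_bound[where B="\<bar>f x0\<bar> + \<kappa>f * R"])
    show "AE \<omega> in M. norm (f (Y \<omega>)) \<le> \<bar>f x0\<bar> + \<kappa>f * R"
    proof (intro AE_I2)
      fix \<omega> assume "\<omega> \<in> space M"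
      then have "\<bar>f (Y \<omega>) - f x0\<bar> \<le> \<kappa>f * R" using fbd Y(2) by blast
      then show "norm (f (Y \<omega>)) \<le> \<bar>f x0\<bar> + \<kappa>f * R" by simp
    qed
    show "(\<lambda>\<omega>. f (Y \<omega>)) \<in> borel_measurable M" using measurable_compose[OF Y(1) f_meas] .
  qed
  define N where "N = past M \<xi>s"
  have Nsub: "subalgebra M (N k)" for k unfolding N_def by (rule past_subalg[OF \<xi>s_meas])
  have Nmono: "X \<in> measurable (N k) B \<Longrightarrow> X \<in> measurable (N (Suc k)) B" for X k and B :: "'b measure"
    unfolding N_def by (rule measurable_from_subalg[OF past_mono])
  have ximN: "\<xi>s k \<in> borel_measurable (N (Suc k))" for k unfolding N_def by (rule past_meas) simp
  have spN[simp]: "space (N k) = space M" for k unfolding N_def by simp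
  have meas_ind: "xs k \<in> borel_measurable (N k) \<and> (\<forall>i\<in>{1..p}. (\<lambda>\<omega>. lam k \<omega> i) \<in> borel_measurable (N k))" for k
  proof (induct k)
    case 0
    have "xs 0 \<in> borel_measurable (N 0)"
      using measurable_cong[of "N 0" "xs 0" "\<lambda>_. x0"] xs0 by simp
    moreover have "(\<lambda>\<omega>. lam 0 \<omega> i) \<in> borel_measurable (N 0)" if "i \<in> {1..p}" for i
      using measurable_cong[of "N 0" "\<lambda>\<omega>. lam 0 \<omega> i" "\<lambda>_. 0"] lam0 that by simp
    ultimately show ?case by blast
  next
    case (Suc k)
    have X: "xs k \<in> borel_measurable (N (Suc k))" using Suc Nmono by blast
    have L: "(\<lambda>\<omega>. lam k \<omega> i) \<in> borel_measurable (N (Suc k))" if "i \<in> {1..p}" for i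
      using Suc Nmono that by blast
    define \<psi> where "\<psi> \<omega> d = lin_AL F G v0 v p \<sigma> (xs k \<omega>) (\<xi>s k \<omega>) d (lam k \<omega>) + \<alpha> / 2 * (norm (d - xs k \<omega>))\<^sup>2" for \<omega> d
    have X1: "xs (Suc k) \<in> borel_measurable (N (Suc k))"
    proof (rule argmin_meas[where C=C and a="\<alpha>/2" and \<psi>=\<psi>])
      show "compact C" "C \<noteq> {}" using C by auto
      show "\<alpha>/2 > 0" using \<alpha>_pos by simp
      show "(\<lambda>\<omega>. \<psi> \<omega> d) \<in> borel_measurable (N (Suc k))" for d
      proof -
        have a: "(\<lambda>\<omega>. lin_AL F G v0 v p \<sigma> (xs k \<omega>) (\<xi>s k \<omega>) d (lam k \<omega>)) \<in> borel_measurable (N (Suc k))"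
          using lin_AL_meas[OF F_meas G_meas v0_meas v_meas X ximN, where Y="\<lambda>_. d" and Lm="\<lambda>\<omega>. lam k \<omega>" and \<sigma>=\<sigma>] L by simp
        note [measurable] = a X
        show ?thesis unfolding \<psi>_def by measurable
      qed
      show "xs (Suc k) \<omega> \<in> C" if "\<omega> \<in> space (N (Suc k))" for \<omega> using that xsC by simp
      show "continuous_on C (\<psi> \<omega>)" for \<omega>
        unfolding \<psi>_def
        by (intro continuous_on_add continuous_on_subset[OF lin_AL_cont] continuous_intros) auto
      show "\<psi> \<omega> (xs (Suc k) \<omega>) + \<alpha> / 2 * (norm (y - xs (Suc k) \<omega>))\<^sup>2 \<le> \<psi> \<omega> y"
        if \<omega>: "\<omega> \<in> space (N (Suc k))" and y: "y \<in> C" for \<omega> y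
      proof -
        have cvx: "convex_on C (\<lambda>y. lin_AL F G v0 v p \<sigma> (xs k \<omega>) (\<xi>s k \<omega>) y (lam k \<omega>))"
          by (rule convex_on_subset[OF lin_AL_convex[OF \<sigma>_pos] _ C(2)]) simp
        have st: "xs (Suc k) \<omega> \<in> C \<and> (\<forall>y\<in>C. lin_AL F G v0 v p \<sigma> (xs k \<omega>) (\<xi>s k \<omega>) (xs (Suc k) \<omega>) (lam k \<omega>)
                   + \<alpha> / 2 * (norm (xs (Suc k) \<omega> - xs k \<omega>))\<^sup>2
                 \<le> lin_AL F G v0 v p \<sigma> (xs k \<omega>) (\<xi>s k \<omega>) y (lam k \<omega>)
                   + \<alpha> / 2 * (norm (y - xs k \<omega>))\<^sup>2)" using xs_step \<omega> by simp
        show ?thesis using three_point[OF cvx C(2) _ \<alpha>_pos _ y] st unfolding \<psi>_def by simp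
      qed
    qed
    have L1: "(\<lambda>\<omega>. lam (Suc k) \<omega> i) \<in> borel_measurable (N (Suc k))" if i: "i \<in> {1..p}" for i
    proof -
      have g: "(\<lambda>\<omega>. G i (xs k \<omega>) (\<xi>s k \<omega>)) \<in> borel_measurable (N (Suc k))"
        by (rule meas_comp2[OF G_meas[OF i] X ximN])
      have w: "(\<lambda>\<omega>. v i (xs k \<omega>) (\<xi>s k \<omega>)) \<in> borel_measurable (N (Suc k))"
        by (rule meas_comp2[OF v_meas[OF i] X ximN])
      note [measurable] = g w X X1 L[OF i]
      have "(\<lambda>\<omega>. pos_part (lam k \<omega> i + \<sigma> * (G i (xs k \<omega>) (\<xi>s k \<omega>)
                 + inner (v i (xs k \<omega>) (\<xi>s k \<omega>)) (xs (Suc k) \<omega> - xs k \<omega>)))) \<in> borel_measurable (N (Suc k))"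
        by measurable
      then show ?thesis using measurable_cong[of "N (Suc k)" "\<lambda>\<omega>. lam (Suc k) \<omega> i"] lam_step[OF _ i] by simp
    qed
    show ?case using X1 L1 by blast
  qed
  have xs_measM: "xs k \<in> borel_measurable M" for k
    using measurable_from_subalg[OF Nsub] meas_ind by blast
  have lam_measM: "(\<lambda>\<omega>. lam k \<omega> i) \<in> borel_measurable M" if "i \<in> {1..p}" for k i
    using measurable_from_subalg[OF Nsub] meas_ind that by blast
  have phi_meas: "(\<lambda>e. (0::'a, e)) \<in> measurable (borel::'q measure) borel"
    by (rule borel_measurable_continuous_onI) (intro continuous_intros)
  have ind_x: "indep_var borel (\<lambda>\<omega>. (xs k \<omega>, 0::'q)) borel (\<lambda>\<omega>. (0::'a, \<xi>s k \<omega>))" for k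
  proof -
    have "(\<lambda>\<omega>. (xs k \<omega>, 0::'q)) \<in> measurable (N k) (borel \<Otimes>\<^sub>M borel)"
      using meas_ind[of k] by (intro measurable_Pair) auto
    then have Y: "(\<lambda>\<omega>. (xs k \<omega>, 0::'q)) \<in> borel_measurable (N k)" by (simp add: borel_prod)
    show ?thesis using indep_from_past[OF M \<xi>s_indep \<xi>s_meas Y[unfolded N_def] phi_meas] .
  qed
  have Fint_k: "integrable M (\<lambda>\<omega>. F (xs k \<omega>) (\<xi>s k \<omega>))" for k
  proof (rule Bochner_Integration.integrable_bound[where f="\<lambda>\<omega>. \<bar>F x0 (\<xi>s k \<omega>)\<bar> + \<kappa>f * R"])
    have "integrable M (\<lambda>\<omega>. F x0 (\<xi>s k \<omega>))" using dintg[OF Fx_meas] F_int[OF x0] by simp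
    then show "integrable M (\<lambda>\<omega>. \<bar>F x0 (\<xi>s k \<omega>)\<bar> + \<kappa>f * R)" by auto
    show "(\<lambda>\<omega>. F (xs k \<omega>) (\<xi>s k \<omega>)) \<in> borel_measurable M" by (rule meas_comp2[OF F_meas xs_measM \<xi>s_meas])
    show "AE \<omega> in M. norm (F (xs k \<omega>) (\<xi>s k \<omega>)) \<le> norm (\<bar>F x0 (\<xi>s k \<omega>)\<bar> + \<kappa>f * R)"
      using AE_k[of k]
    proof (rule AE_mp, intro AE_I2 impI)
      fix \<omega> assume \<omega>: "\<omega> \<in> space M" and e: "\<xi>s k \<omega> \<in> \<Xi>"
      have "\<bar>F (xs k \<omega>) (\<xi>s k \<omega>) - F x0 (\<xi>s k \<omega>)\<bar> \<le> \<kappa>f * R" using Fbd[OF xsC[OF \<omega>] e] .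
      moreover have "\<kappa>f * R \<ge> 0" using kf0 R0 by simp
      ultimately show "norm (F (xs k \<omega>) (\<xi>s k \<omega>)) \<le> norm (\<bar>F x0 (\<xi>s k \<omega>)\<bar> + \<kappa>f * R)" by simp
    qed
  qed
  have Ea: "(\<integral>\<omega>. F (xs k \<omega>) (\<xi>s k \<omega>) \<partial>M) = (\<integral>\<omega>. f (xs k \<omega>) \<partial>M)" for k
  proof -
    have H2: "(\<lambda>(u, w). (\<lambda>(u::'a \<times> 'q) (w::'a \<times> 'q). F (fst u) (snd w)) u w) \<in> borel_measurable borel"
    proof -
      have a: "(\<lambda>q::('a \<times> 'q) \<times> ('a \<times> 'q). fst (fst q)) \<in> borel_measurable borel"
        by (rule borel_measurable_continuous_onI) (intro continuous_intros)
      have b: "(\<lambda>q::('a \<times> 'q) \<times> ('a \<times> 'q). snd (snd q)) \<in> borel_measurable borel"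
        by (rule borel_measurable_continuous_onI) (intro continuous_intros)
      show ?thesis using meas_comp2[OF F_meas a b] by (simp add: split_beta')
    qed
    have "(\<integral>\<omega>. F (xs k \<omega>) (\<xi>s k \<omega>) \<partial>M) = (\<integral>\<omega>. (\<integral>\<omega>'. F (xs k \<omega>) (\<xi>s k \<omega>') \<partial>M) \<partial>M)"
      using indep_integral_comp[OF M ind_x[of k] H2] Fint_k[of k] by simp
    also have "\<dots> = (\<integral>\<omega>. f (xs k \<omega>) \<partial>M)"
      unfolding f_def using dint[OF Fx_meas] by simp
    finally show ?thesis .
  qed
  define B where "B = \<sigma> * (\<nu>g + \<kappa>g * R)"
  have lam_bd: "lam k \<omega> i \<le> real k * B"
    if \<omega>: "\<omega> \<in> space M" "\<forall>j. \<xi>s j \<omega> \<in> \<Xi>" and i: "i \<in> {1..p}" for k \<omega> i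
  proof (induct k)
    case 0 then show ?case using lam0[OF \<omega>(1) i] by simp
  next
    case (Suc k)
    define x where "x = xs k \<omega>"
    define e where "e = \<xi>s k \<omega>"
    have xC: "x \<in> C" and x1C: "xs (Suc k) \<omega> \<in> C" unfolding x_def using xsC \<omega> by auto
    have e: "e \<in> \<Xi>" unfolding e_def using \<omega> by auto
    have "(G i x e)\<^sup>2 \<le> (\<Sum>j=1..p. (G j x e)\<^sup>2)" using i by (intro member_le_sum) auto
    then have "\<bar>G i x e\<bar> \<le> sqrt (\<Sum>j=1..p. (G j x e)\<^sup>2)" using real_sqrt_le_mono real_sqrt_abs by metis
    then have Gb: "G i x e \<le> \<nu>g" using A2[OF xC e] by linarith
    have kg0: "\<kappa>g \<ge> 0" using A3g[OF i xC e] norm_ge_zero[of "v i x e"] by linarith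
    have "inner (v i x e) (xs (Suc k) \<omega> - x) \<le> norm (v i x e) * norm (xs (Suc k) \<omega> - x)"
      using Cauchy_Schwarz_ineq2[of "v i x e" "xs (Suc k) \<omega> - x"] by linarith
    also have "\<dots> \<le> \<kappa>g * R" using A3g[OF i xC e] A1[OF x1C xC] kg0 by (intro mult_mono) auto
    finally have ib: "inner (v i x e) (xs (Suc k) \<omega> - x) \<le> \<kappa>g * R" .
    have B0: "B \<ge> 0" unfolding B_def using \<sigma>_pos ng0 kg0 R0 by simp
    have "lam k \<omega> i + \<sigma> * (G i x e + inner (v i x e) (xs (Suc k) \<omega> - x)) \<le> real k * B + B"
      using Suc Gb ib \<sigma>_pos unfolding B_def
      by (smt (verit, best) mult_left_mono)
    then show ?case using lam_step[OF \<omega>(1) i] B0 unfolding x_def e_def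
      by (simp add: pos_part_def algebra_simps)
  qed
  have lam_int: "integrable M (\<lambda>\<omega>. lam k \<omega> i)" if i: "i \<in> {1..p}" for k i
  proof (rule integrable_const_bound[where B="real k * B"])
    show "AE \<omega> in M. norm (lam k \<omega> i) \<le> real k * B"
      using AE_all by (rule AE_mp) (auto intro!: AE_I2 simp: lam_nn[OF _ i] lam_bd[OF _ _ i])
    show "(\<lambda>\<omega>. lam k \<omega> i) \<in> borel_measurable M" using lam_measM[OF i] .
  qed
  have Gz_int: "integrable M (\<lambda>\<omega>. G i z (\<xi>s k \<omega>))" if i: "i \<in> {1..p}" for k i
    using dintg[OF Gx_meas[OF i]] G_int[OF i z(1)] by simp
  have ind_lam: "indep_var borel (\<lambda>\<omega>. lam k \<omega> i) borel (\<lambda>\<omega>. G i z (\<xi>s k \<omega>))" if i: "i \<in> {1..p}" for k i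
    using indep_from_past[OF M \<xi>s_indep \<xi>s_meas _ Gx_meas[OF i]] meas_ind[of k] i unfolding N_def by blast
  have LG_int: "integrable M (\<lambda>\<omega>. lam k \<omega> i * G i z (\<xi>s k \<omega>))" if i: "i \<in> {1..p}" for k i
    using indep_var_integrable[OF ind_lam[OF i] lam_int[OF i] Gz_int[OF i]] .
  have Eb: "(\<integral>\<omega>. lam k \<omega> i * G i z (\<xi>s k \<omega>) \<partial>M) \<le> 0" if i: "i \<in> {1..p}" for k i
  proof -
    have "(\<integral>\<omega>. lam k \<omega> i * G i z (\<xi>s k \<omega>) \<partial>M) = (\<integral>\<omega>. lam k \<omega> i \<partial>M) * (\<integral>\<omega>. G i z (\<xi>s k \<omega>) \<partial>M)"
      using indep_var_lebesgue_integral[OF ind_lam[OF i] lam_int[OF i] Gz_int[OF i]] .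
    also have "\<dots> = (\<integral>\<omega>. lam k \<omega> i \<partial>M) * (\<integral>\<omega>. G i z (\<xi> \<omega>) \<partial>M)"
      using dint[OF Gx_meas[OF i]] by simp
    also have "\<dots> \<le> 0"
    proof (rule mult_nonneg_nonpos)
      show "0 \<le> (\<integral>\<omega>. lam k \<omega> i \<partial>M)" by (rule integral_nonneg_AE) (auto intro!: AE_I2 lam_nn i)
      show "(\<integral>\<omega>. G i z (\<xi> \<omega>) \<partial>M) \<le> 0" using z(2)[OF i] .
    qed
    finally show ?thesis .
  qed
  define c0 where "c0 = \<kappa>f\<^sup>2 / (2 * \<alpha>) + \<sigma> / 2 * \<nu>g\<^sup>2"
  have det: "(\<Sum>k<K. F (xs k \<omega>) (\<xi>s k \<omega>)) \<le> (\<Sum>k<K. F z (\<xi>s k \<omega>))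
      + (\<Sum>k<K. \<Sum>i=1..p. lam k \<omega> i * G i z (\<xi>s k \<omega>)) + real K * c0 + \<alpha> / 2 * R\<^sup>2"
    if \<omega>: "\<omega> \<in> space M" "\<forall>j. \<xi>s j \<omega> \<in> \<Xi>" for \<omega>
  proof -
    define D where "D k = (norm (z - xs k \<omega>))\<^sup>2" for k
    define S where "S k = (\<Sum>i=1..p. (lam k \<omega> i)\<^sup>2)" for k
    define SLG where "SLG k = (\<Sum>i=1..p. lam k \<omega> i * G i z (\<xi>s k \<omega>))" for k
    have stp: "F (xs k \<omega>) (\<xi>s k \<omega>) - F z (\<xi>s k \<omega>) \<le> c0 + SLG k + \<alpha>/2 * (D k - D (Suc k))
        + 1 / (2 * \<sigma>) * (S k - S (Suc k))" for k
    proof -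
      have e: "\<xi>s k \<omega> \<in> \<Xi>" using \<omega> by auto
      have st: "\<forall>y\<in>C. lin_AL F G v0 v p \<sigma> (xs k \<omega>) (\<xi>s k \<omega>) (xs (Suc k) \<omega>) (lam k \<omega>)
                   + \<alpha> / 2 * (norm (xs (Suc k) \<omega> - xs k \<omega>))\<^sup>2
                 \<le> lin_AL F G v0 v p \<sigma> (xs k \<omega>) (\<xi>s k \<omega>) y (lam k \<omega>)
                   + \<alpha> / 2 * (norm (y - xs k \<omega>))\<^sup>2" using xs_step \<omega>(1) by blast
      show ?thesis
        using step_ineq[OF \<sigma>_pos \<alpha>_pos C(2) xsC[OF \<omega>(1)] xsC[OF \<omega>(1)] z(1)
            v0_sub[OF xsC[OF \<omega>(1)] e] v_sub[OF _ xsC[OF \<omega>(1)] e] A3f[OF xsC[OF \<omega>(1)] e] A2[OF z(1) e]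
            lam_nn[OF \<omega>(1)] st lam_step[OF \<omega>(1)]]
        unfolding c0_def SLG_def D_def S_def by simp
    qed
    have "(\<Sum>k<K. F (xs k \<omega>) (\<xi>s k \<omega>) - F z (\<xi>s k \<omega>))
        \<le> (\<Sum>k<K. c0 + SLG k + \<alpha>/2 * (D k - D (Suc k)) + 1 / (2 * \<sigma>) * (S k - S (Suc k)))"
      by (rule sum_mono) (rule stp)
    also have "\<dots> = real K * c0 + (\<Sum>k<K. SLG k) + \<alpha>/2 * (D 0 - D K) + 1 / (2 * \<sigma>) * (S 0 - S K)"
    proof -
      have t1: "(\<Sum>k<K. \<alpha>/2 * (D k - D (Suc k))) = \<alpha>/2 * (D 0 - D K)"
        by (simp only: sum_distrib_left[symmetric] sum_lessThan_telescope')
      have t2: "(\<Sum>k<K. 1 / (2 * \<sigma>) * (S k - S (Suc k))) = 1 / (2 * \<sigma>) * (S 0 - S K)"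
        by (simp only: sum_distrib_left[symmetric] sum_lessThan_telescope')
      show ?thesis by (simp only: sum.distrib t1 t2) simp
    qed
    also have "\<dots> \<le> real K * c0 + (\<Sum>k<K. SLG k) + \<alpha>/2 * R\<^sup>2"
    proof -
      have "D 0 \<le> R\<^sup>2" unfolding D_def using A1[OF z(1) x0] xs0[OF \<omega>(1)]
        by (simp add: power_mono)
      moreover have "D K \<ge> 0" unfolding D_def by simp
      moreover have "S 0 = 0" unfolding S_def using lam0[OF \<omega>(1)] by simp
      moreover have "S K \<ge> 0" unfolding S_def by (simp add: sum_nonneg)
      ultimately have "\<alpha>/2 * (D 0 - D K) \<le> \<alpha>/2 * R\<^sup>2" "1 / (2 * \<sigma>) * (S 0 - S K) \<le> 0"
        using \<alpha>_pos \<sigma>_pos by (auto intro: mult_left_mono mult_nonneg_nonpos)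
      then show ?thesis by linarith
    qed
    finally show ?thesis unfolding SLG_def by (simp add: sum_subtractf)
  qed
  have Fz_int: "integrable M (\<lambda>\<omega>. F z (\<xi>s k \<omega>))" for k using dintg[OF Fx_meas] F_int[OF z(1)] by simp
  have IS1: "integrable M (\<lambda>\<omega>. \<Sum>k<K. F z (\<xi>s k \<omega>))" by (rule Bochner_Integration.integrable_sum) (rule Fz_int)
  have IS2: "integrable M (\<lambda>\<omega>. \<Sum>k<K. \<Sum>i=1..p. lam k \<omega> i * G i z (\<xi>s k \<omega>))"
    by (intro Bochner_Integration.integrable_sum LG_int) auto
  have IS0: "integrable M (\<lambda>\<omega>. \<Sum>k<K. F (xs k \<omega>) (\<xi>s k \<omega>))" by (rule Bochner_Integration.integrable_sum) (rule Fint_k)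
  have int_le: "(\<integral>\<omega>. (\<Sum>k<K. F (xs k \<omega>) (\<xi>s k \<omega>)) \<partial>M) \<le> (\<integral>\<omega>. (\<Sum>k<K. F z (\<xi>s k \<omega>))
      + (\<Sum>k<K. \<Sum>i=1..p. lam k \<omega> i * G i z (\<xi>s k \<omega>)) + real K * c0 + \<alpha> / 2 * R\<^sup>2 \<partial>M)"
  proof (rule integral_mono_AE)
    show "AE \<omega> in M. (\<Sum>k<K. F (xs k \<omega>) (\<xi>s k \<omega>)) \<le> (\<Sum>k<K. F z (\<xi>s k \<omega>))
      + (\<Sum>k<K. \<Sum>i=1..p. lam k \<omega> i * G i z (\<xi>s k \<omega>)) + real K * c0 + \<alpha> / 2 * R\<^sup>2"
      using AE_all by (rule AE_mp) (intro AE_I2 impI, rule det, assumption+)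
    show "integrable M (\<lambda>\<omega>. \<Sum>k<K. F (xs k \<omega>) (\<xi>s k \<omega>))" by (rule IS0)
    show "integrable M (\<lambda>\<omega>. (\<Sum>k<K. F z (\<xi>s k \<omega>))
      + (\<Sum>k<K. \<Sum>i=1..p. lam k \<omega> i * G i z (\<xi>s k \<omega>)) + real K * c0 + \<alpha> / 2 * R\<^sup>2)"
      by (intro Bochner_Integration.integrable_add finite_measure.integrable_const[OF finite_measure_axioms] IS1 IS2)
  qed
  have lhs: "(\<integral>\<omega>. (\<Sum>k<K. F (xs k \<omega>) (\<xi>s k \<omega>)) \<partial>M) = (\<Sum>k<K. \<integral>\<omega>. f (xs k \<omega>) \<partial>M)"
    using Fint_k Ea by (simp add: Bochner_Integration.integral_sum)
  have rhs: "(\<integral>\<omega>. (\<Sum>k<K. F z (\<xi>s k \<omega>))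
      + (\<Sum>k<K. \<Sum>i=1..p. lam k \<omega> i * G i z (\<xi>s k \<omega>)) + real K * c0 + \<alpha> / 2 * R\<^sup>2 \<partial>M)
      = real K * f z + (\<Sum>k<K. \<Sum>i=1..p. \<integral>\<omega>. lam k \<omega> i * G i z (\<xi>s k \<omega>) \<partial>M) + real K * c0 + \<alpha> / 2 * R\<^sup>2"
  proof -
    have a: "(\<integral>\<omega>. F z (\<xi>s k \<omega>) \<partial>M) = f z" for k unfolding f_def using dint[OF Fx_meas] by simp
    have "(\<integral>\<omega>. (\<Sum>k<K. F z (\<xi>s k \<omega>))
      + (\<Sum>k<K. \<Sum>i=1..p. lam k \<omega> i * G i z (\<xi>s k \<omega>)) + real K * c0 + \<alpha> / 2 * R\<^sup>2 \<partial>M)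
      = (\<integral>\<omega>. (\<Sum>k<K. F z (\<xi>s k \<omega>)) \<partial>M) + (\<integral>\<omega>. (\<Sum>k<K. \<Sum>i=1..p. lam k \<omega> i * G i z (\<xi>s k \<omega>)) \<partial>M)
        + real K * c0 + \<alpha> / 2 * R\<^sup>2"
      using IS1 IS2 by (simp add: prob_space)
    also have "\<dots> = real K * f z + (\<Sum>k<K. \<Sum>i=1..p. \<integral>\<omega>. lam k \<omega> i * G i z (\<xi>s k \<omega>) \<partial>M) + real K * c0 + \<alpha> / 2 * R\<^sup>2"
    proof -
      have n1: "(\<integral>\<omega>. (\<Sum>i=1..p. lam k \<omega> i * G i z (\<xi>s k \<omega>)) \<partial>M) = (\<Sum>i=1..p. \<integral>\<omega>. lam k \<omega> i * G i z (\<xi>s k \<omega>) \<partial>M)" for k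
        by (rule Bochner_Integration.integral_sum) (rule LG_int)
      have n2: "(\<integral>\<omega>. (\<Sum>k<K. \<Sum>i=1..p. lam k \<omega> i * G i z (\<xi>s k \<omega>)) \<partial>M) = (\<Sum>k<K. \<integral>\<omega>. (\<Sum>i=1..p. lam k \<omega> i * G i z (\<xi>s k \<omega>)) \<partial>M)"
        by (rule Bochner_Integration.integral_sum) (intro Bochner_Integration.integrable_sum LG_int)
      have n3: "(\<integral>\<omega>. (\<Sum>k<K. F z (\<xi>s k \<omega>)) \<partial>M) = (\<Sum>k<K. \<integral>\<omega>. F z (\<xi>s k \<omega>) \<partial>M)"
        by (rule Bochner_Integration.integral_sum) (rule Fz_int)
      show ?thesis unfolding n2 n1 n3 a by simp
    qed
    finally show ?thesis .
  qed
  have Ebs: "(\<Sum>k<K. \<Sum>i=1..p. \<integral>\<omega>. lam k \<omega> i * G i z (\<xi>s k \<omega>) \<partial>M) \<le> 0"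
    by (intro sum_nonpos Eb) auto
  have sumf: "(\<Sum>k<K. \<integral>\<omega>. f (xs k \<omega>) \<partial>M) \<le> real K * f z + real K * c0 + \<alpha> / 2 * R\<^sup>2"
    using int_le lhs rhs Ebs by linarith
  define xb where "xb \<omega> = (1 / real K) *\<^sub>R (\<Sum>k<K. xs k \<omega>)" for \<omega>
  have Kp: "real K > 0" using K by simp
  have wsum: "(\<Sum>k<K. 1 / real K) = 1" using Kp by simp
  have xb_eq: "xb \<omega> = (\<Sum>k<K. (1 / real K) *\<^sub>R xs k \<omega>)" for \<omega> unfolding xb_def by (simp add: scaleR_sum_right)
  have xbC: "xb \<omega> \<in> C" if \<omega>: "\<omega> \<in> space M" for \<omega>
    unfolding xb_eq using convex_sum[OF _ C(2) wsum] xsC[OF \<omega>] by simp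
  have xb_meas: "xb \<in> borel_measurable M" unfolding xb_def using xs_measM by measurable
  have jensen: "f (xb \<omega>) \<le> (\<Sum>k<K. 1 / real K * f (xs k \<omega>))" if \<omega>: "\<omega> \<in> space M" for \<omega>
  proof -
    have pt: "F (xb \<omega>) e \<le> (\<Sum>k<K. 1 / real K * F (xs k \<omega>) e)" if e: "e \<in> \<Xi>" for e
      unfolding xb_eq using convex_on_sum[of "{..<K}" C "\<lambda>x. F x e" "\<lambda>_. 1 / real K" "\<lambda>k. xs k \<omega>"]
        F_cvx[OF e] K wsum xsC[OF \<omega>] by fastforce
    have "f (xb \<omega>) \<le> (\<integral>\<omega>'. (\<Sum>k<K. 1 / real K * F (xs k \<omega>) (\<xi> \<omega>')) \<partial>M)"
      unfolding f_def
    proof (rule integral_mono_AE)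
      show "AE \<omega>' in M. F (xb \<omega>) (\<xi> \<omega>') \<le> (\<Sum>k<K. 1 / real K * F (xs k \<omega>) (\<xi> \<omega>'))"
        using \<xi>_supp by (rule AE_mp) (intro AE_I2 impI, rule pt, assumption)
    qed (auto intro!: F_int xbC[OF \<omega>] xsC[OF \<omega>])
    also have "\<dots> = (\<Sum>k<K. 1 / real K * f (xs k \<omega>))"
      unfolding f_def using F_int xsC[OF \<omega>] by (simp add: Bochner_Integration.integral_sum)
    finally show ?thesis .
  qed
  have outer: "(\<integral>\<omega>. f (xb \<omega>) \<partial>M) \<le> (\<Sum>k<K. 1 / real K * (\<integral>\<omega>. f (xs k \<omega>) \<partial>M))"
  proof -
    have "(\<integral>\<omega>. f (xb \<omega>) \<partial>M) \<le> (\<integral>\<omega>. (\<Sum>k<K. 1 / real K * f (xs k \<omega>)) \<partial>M)"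
    proof (rule integral_mono)
      show "integrable M (\<lambda>\<omega>. f (xb \<omega>))" by (rule fcomp_int[OF xb_meas xbC])
      show "integrable M (\<lambda>\<omega>. \<Sum>k<K. 1 / real K * f (xs k \<omega>))"
        by (intro Bochner_Integration.integrable_sum integrable_mult_right fcomp_int[OF xs_measM xsC])
      show "f (xb \<omega>) \<le> (\<Sum>k<K. 1 / real K * f (xs k \<omega>))" if "\<omega> \<in> space M" for \<omega>
        by (rule jensen[OF that])
    qed
    also have "\<dots> = (\<Sum>k<K. 1 / real K * (\<integral>\<omega>. f (xs k \<omega>) \<partial>M))"
      by (simp add: Bochner_Integration.integral_sum fcomp_int xs_measM xsC)
    finally show ?thesis .
  qed
  have "(\<Sum>k<K. 1 / real K * (\<integral>\<omega>. f (xs k \<omega>) \<partial>M)) = 1 / real K * (\<Sum>k<K. \<integral>\<omega>. f (xs k \<omega>) \<partial>M)"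
    by (simp add: sum_distrib_left)
  also have "\<dots> \<le> 1 / real K * (real K * f z + real K * c0 + \<alpha> / 2 * R\<^sup>2)"
    using sumf Kp by (intro mult_left_mono) auto
  also have "\<dots> = f z + c0 + \<alpha> / (2 * real K) * R\<^sup>2" using Kp by (simp add: field_simps)
  finally have fin: "(\<integral>\<omega>. f (xb \<omega>) \<partial>M) - f z \<le> c0 + \<alpha> / (2 * real K) * R\<^sup>2" using outer by linarith
  show ?thesis using fin unfolding f_def xb_def c0_def by simp
qed

end
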